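(* Let $n\ge2$. For any set $X\subset\mathbb{S}$ there exist $c\in\mathbb{R}^n$ and $k\in\mathbb{R}$ such that the spherical cap $\mathcal{C}_{c,k}=\{x\in\mathbb{S}:c^Tx>k\}$ satisfies $\mathcal{C}_{c,k}\subset X$ and $\Delta(\mathcal{C}_{c,k})=\Delta(X)$.
   Context: $\mathbb{S}$ and $\mathbb{B}$ are the Euclidean unit sphere and closed unit ball of $\mathbb{R}^n$. For $X\subset\mathbb{S}$, $\Delta(X)=\sup\{r\in[0,1]: r\mathbb{B}\subset\mathrm{conv}(\mathbb{S}\setminus X)\}$, with the supremum of the empty set taken as $0$. *)

theory Defs
  imports "HOL-Analysis.Analysis"
begin

definition Delta :: "(real^'n) set \<Rightarrow> real" where
  "Delta X = (let R = {r \<in> {0..1}. (\<lambda>x. r *\<^sub>R x) ` cball 0 1 \<subseteq> convex hull (sphere 0 1 - X)}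
              in if R = {} then 0 else Sup R)"

definition cap :: "real^'n \<Rightarrow> real \<Rightarrow> (real^'n) set" where
  "cap c k = {x \<in> sphere 0 1. c \<bullet> x > k}"

end

theory Submission
  imports Defs
begin

lemma Delta_R_bdd: "bdd_above {r \<in> {0..1::real}. P r}"
  by (rule bdd_aboveI[of _ 1]) auto

lemma Delta_le1: "Delta (X::(real^'n) set) \<le> 1"
  unfolding Delta_def Let_def
  by (auto intro!: cSup_least)

lemma Delta_mono:
  fixes A B :: "(real^'n) set"
  assumes "A \<subseteq> B"
  shows "Delta B \<le> Delta A"
proof -
  define RA where "RA = {r \<in> {0..1::real}. (\<lambda>x. r *\<^sub>R x) ` cball (0::real^'n) 1 \<subseteq> convex hull (sphere 0 1 - A)}"
  define RB where "RB = {r \<in> {0..1::real}. (\<lambda>x. r *\<^sub>R x) ` cball (0::real^'n) 1 \<subseteq> convex hull (sphere 0 1 - B)}"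
  have sub: "RB \<subseteq> RA" unfolding RA_def RB_def using assms
    by (auto intro: subsetD[OF hull_mono, rotated])
  have bA: "bdd_above RA" unfolding RA_def by (rule Delta_R_bdd)
  have "(if RB = {} then 0 else Sup RB) \<le> (if RA = {} then 0 else Sup RA)"
  proof (cases "RB = {}")
    case True
    then show ?thesis using bA unfolding RA_def
      by (auto intro: order.trans[OF _ cSup_upper])
  next
    case False
    then show ?thesis using sub bA by (auto intro!: cSup_subset_mono)
  qed
  then show ?thesis unfolding Delta_def Let_def RA_def RB_def by simp
qed

theorem lemma2:
  fixes X :: "(real^'n) set"
  assumes "CARD('n) \<ge> 2"
    and "X \<subseteq> sphere 0 1"
  shows "\<exists>c k. cap c k \<subseteq> X \<and> Delta (cap c k) = Delta X"
proof -
  define A where "A = sphere (0::real^'n) 1 - X"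
  define R where "R = {r \<in> {0..1::real}. (\<lambda>x. r *\<^sub>R x) ` cball (0::real^'n) 1 \<subseteq> convex hull A}"
  define r where "r = Delta X"
  have r_def2: "r = (if R = {} then 0 else Sup R)"
    unfolding r_def Delta_def Let_def R_def A_def by simp
  have bR: "bdd_above R" unfolding R_def by (rule Delta_R_bdd)
  have r0: "0 \<le> r" unfolding r_def2 using bR
    by (auto simp: R_def intro: order.trans[OF _ cSup_upper])
  have notR: "r' \<notin> R" if "r < r'" for r'
    using that bR cSup_upper[of r' R] unfolding r_def2 by (auto split: if_splits)
  show ?thesis
  proof (cases "A = {}")
    case True
    then have "X = sphere 0 1" using assms(2) unfolding A_def by auto
    moreover have "cap 0 (-1) = sphere (0::real^'n) 1" unfolding cap_def by auto
    ultimately have e: "cap 0 (-1) = X" by simp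
    have "cap 0 (-1) \<subseteq> X \<and> Delta (cap (0::real^'n) (-1)) = Delta X" unfolding e by simp
    then show ?thesis by blast
  next
    case Ane: False
    show ?thesis
    proof (cases "r < 1")
      case False
      have "cap 0 1 = ({}::(real^'n) set)" unfolding cap_def by auto
      moreover have "Delta ({}::(real^'n) set) = Delta X"
        using Delta_le1[of "{}::(real^'n) set"] Delta_mono[of "{}" X] False r_def by auto
      ultimately have "cap 0 1 \<subseteq> X \<and> Delta (cap (0::real^'n) 1) = Delta X" by simp
      then show ?thesis by blast
    next
      case True
      define S where "S m = {c \<in> sphere (0::real^'n) 1. \<forall>y\<in>A. c \<bullet> y \<le> r + 1 / real (Suc m)}" for m
      have closedS: "closed (S m)" for m
      proof -
        have "S m = sphere 0 1 \<inter> (\<Inter>y\<in>A. {c. y \<bullet> c \<le> r + 1 / real (Suc m)})"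
          unfolding S_def by (auto simp: inner_commute)
        then show ?thesis by (auto intro!: closed_Int closed_INT closed_halfspace_le)
      qed
      have neS: "S m \<noteq> {}" for m
      proof -
        define r' where "r' = min 1 (r + 1 / real (Suc m))"
        have "r < r'" using True unfolding r'_def by auto
        then have "r' \<notin> R" by (rule notR)
        moreover have "r' \<in> {0..1}" using r0 unfolding r'_def by auto
        ultimately obtain x where x: "x \<in> cball 0 1" "r' *\<^sub>R x \<notin> convex hull A"
          unfolding R_def image_subset_iff by blast
        define p where "p = r' *\<^sub>R x"
        have np: "norm p \<le> r'" using x(1) r0 \<open>r < r'\<close> unfolding p_def
          by (auto simp: mult_left_le)
        obtain a b where ab: "a \<noteq> 0" "\<forall>y\<in>convex hull A. a \<bullet> y \<le> b" "\<forall>y\<in>{p}. b \<le> a \<bullet> y"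
          using separating_hyperplane_sets[of "convex hull A" "{p}"] Ane x(2) unfolding p_def
          by (auto simp: convex_convex_hull)
        define c where "c = a /\<^sub>R norm a"
        have c1: "c \<in> sphere 0 1" using ab(1) unfolding c_def by auto
        have "c \<bullet> y \<le> r + 1 / real (Suc m)" if "y \<in> A" for y
        proof -
          have yh: "y \<in> convex hull A" using hull_subset[of A convex] that by blast
          have "a \<bullet> y \<le> b" using ab(2) yh by blast
          also have "b \<le> a \<bullet> p" using ab(3) by simp
          finally have "a \<bullet> y \<le> a \<bullet> p" .
          then have "c \<bullet> y \<le> c \<bullet> p" unfolding c_def using ab(1)
            by (auto simp: divide_right_mono)
          also have "\<dots> \<le> norm c * norm p" by (rule Cauchy_Schwarz_ineq2[THEN order.trans[OF abs_ge_self]])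
          also have "\<dots> \<le> r'" using c1 np by simp
          also have "\<dots> \<le> r + 1 / real (Suc m)" unfolding r'_def by simp
          finally show ?thesis .
        qed
        then show ?thesis using c1 unfolding S_def by auto
      qed
      have monoS: "S n \<subseteq> S m" if "m \<le> n" for m n
      proof -
        have "1 / real (Suc n) \<le> 1 / real (Suc m)" using that by (simp add: frac_le)
        then show ?thesis unfolding S_def by force
      qed
      have "bounded (S 0)" unfolding S_def by (rule bounded_subset[OF bounded_sphere[of 0 1]]) auto
      then obtain c where c: "\<And>m. c \<in> S m"
        using bounded_closed_nest[of S, OF closedS neS monoS] by blast
      have c1: "norm c = 1" using c[of 0] unfolding S_def by auto
      have cA: "c \<bullet> y \<le> r" if "y \<in> A" for y
      proof (rule field_le_epsilon)
        fix e :: real assume "e > 0"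
        then obtain m where m: "1 / real (Suc m) < e"
          by (metis nat_approx_posE)
        have "c \<bullet> y \<le> r + 1 / real (Suc m)" using c[of m] that unfolding S_def by auto
        then show "c \<bullet> y \<le> r + e" using m by linarith
      qed
      have sub: "cap c r \<subseteq> X" using cA unfolding cap_def A_def by force
      have le: "Delta (cap c r) \<le> r"
      proof -
        define Q where "Q = {s \<in> {0..1::real}. (\<lambda>x. s *\<^sub>R x) ` cball (0::real^'n) 1 \<subseteq> convex hull (sphere 0 1 - cap c r)}"
        have hs: "convex hull (sphere 0 1 - cap c r) \<subseteq> {y. c \<bullet> y \<le> r}"
          by (rule hull_minimal) (auto simp: cap_def convex_halfspace_le)
        have "q \<le> r" if "q \<in> Q" for q
        proof -
          have "c \<in> cball 0 1" using c1 by simp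
          then have "q *\<^sub>R c \<in> convex hull (sphere 0 1 - cap c r)" using that unfolding Q_def by blast
          then have "c \<bullet> (q *\<^sub>R c) \<le> r" using hs by auto
          then show ?thesis using c1 by (simp add: inner_commute dot_square_norm power2_norm_eq_inner[symmetric])
        qed
        then have "(if Q = {} then 0 else Sup Q) \<le> r" using r0 by (auto intro!: cSup_least)
        then show ?thesis unfolding Delta_def Let_def Q_def by simp
      qed
      have "Delta X \<le> Delta (cap c r)" by (rule Delta_mono[OF sub])
      then have "cap c r \<subseteq> X \<and> Delta (cap c r) = Delta X" using le sub unfolding r_def by simp
      then show ?thesis by blast
    qed
  qed
qed

end
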